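(* Let $A\in {\operatorname{\mathsf{TPD}}}_n(\mathbb{S}_{\max}^\vee)$, and set $\gamma_{i}=a_{ii}$ for $i\in [n]$. Assume that $\gamma_{1}\succeq \gamma_{2} \succeq \cdots \succeq \gamma_{n}$, and define $B_k=\gamma_k I\ominus A$ for some $k \in [n]$. Then, all the diagonal entries of $(B_k)^{\mathrm{adj}}$ are non-zero and they are all in $\mathbb{S}_{\max}^\circ$ except possibly the $k$-th diagonal entry, which is also in $\mathbb{S}_{\max}^\circ$ if and only if $\gamma_k$ is not a simple $\mathbb{S}_{\max}$-eigenvalue.
   Context: $\mathbb{S}_{\max}$ is the symmetrized tropical semiring over a divisible totally ordered abelian group, with zero $\mathbf{0}$, unit $\mathbf{1}$, minus $\ominus$; $\mathbb{S}_{\max}^\vee$ is the set of signed elements and $\mathbb{S}_{\max}^\circ$ the set of balanced elements ($c\ominus c$). $a\preceq b$ iff $b=a\oplus b$. $A\in{\operatorname{\mathsf{TPD}}}_n(\mathbb{S}_{\max}^\vee)$: $A$ symmetric with signed entries, $\mathbf{0}<a_{ii}$ and $a_{ij}^2<a_{ii}a_{jj}$ for $i\ne j$ (where $a<b$ iff $b\ominus a$ is positive). $(M^{\mathrm{adj}})_{ij}=(\ominus\mathbf{1})^{i+j}\det M[\hat j,\hat i]$ with the signed determinant. The $\mathbb{S}_{\max}$-eigenvalues of $A$ are its diagonal entries, counted with multiplicity; $\gamma_k$ is simple iff it occurs once, i.e. $\gamma_{k-1}\succ\gamma_k\succ\gamma_{k+1}$ (convention $\gamma_{n+1}=\mathbf{0}$,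 and $a\succ b$ means $b\preceq a$, $a\ne b$). *)

theory Defs
  imports "HOL-Combinatorics.Permutations"
begin

text \<open>Elements: the zero (bottom), and for every g in the group G the positive element
  (Pos g), the negative element (Neg g = minus Pos g) and the balanced element (Bal g = Pos g minus Pos g).\<close>

datatype 'g smax = SZero | Pos 'g | Neg 'g | Bal 'g

fun md :: "'g smax \<Rightarrow> 'g" where
  "md (Pos a) = a" | "md (Neg a) = a" | "md (Bal a) = a" | "md SZero = undefined"

fun splus :: "'g::linorder smax \<Rightarrow> 'g smax \<Rightarrow> 'g smax" where
  "splus SZero y = y"
| "splus x SZero = x"
| "splus x y = (if md y < md x then x else if md x < md y then y
                else if x = y then x else Bal (md x))"

fun stimes :: "'g::ab_group_add smax \<Rightarrow> 'g smax \<Rightarrow> 'g smax" where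
  "stimes SZero y = SZero"
| "stimes x SZero = SZero"
| "stimes (Pos a) (Pos b) = Pos (a + b)"
| "stimes (Pos a) (Neg b) = Neg (a + b)"
| "stimes (Neg a) (Pos b) = Neg (a + b)"
| "stimes (Neg a) (Neg b) = Pos (a + b)"
| "stimes x y = Bal (md x + md y)"

instantiation smax :: (linordered_ab_group_add) comm_monoid_add
begin
definition zero_smax_def: "0 = SZero"
definition plus_smax_def: "x + y = splus x y"
instance
proof
  fix a b c :: "'a smax"
  show "a + b + c = a + (b + c)"
    unfolding plus_smax_def
    by (cases a; cases b; cases c) auto
  show "a + b = b + a"
    unfolding plus_smax_def
    by (cases a; cases b) auto
  show "0 + a = a" unfolding plus_smax_def zero_smax_def by simp
qed
end

instantiation smax :: (linordered_ab_group_add) comm_monoid_mult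
begin
definition one_smax_def: "1 = Pos 0"
definition times_smax_def: "x * y = stimes x y"
instance
proof
  fix a b c :: "'a smax"
  show "a * b * c = a * (b * c)"
    unfolding times_smax_def
    by (cases a; cases b; cases c) (auto simp: add.assoc)
  show "a * b = b * a"
    unfolding times_smax_def
    by (cases a; cases b) (auto simp: add.commute)
  show "1 * a = a" unfolding times_smax_def one_smax_def by (cases a) auto
qed
end

fun sneg :: "'g smax \<Rightarrow> 'g smax" where
  "sneg SZero = SZero" | "sneg (Pos a) = Neg a" | "sneg (Neg a) = Pos a" | "sneg (Bal a) = Bal a"

definition sminus :: "'g::linordered_ab_group_add smax \<Rightarrow> 'g smax \<Rightarrow> 'g smax" where
  "sminus a b = a + sneg b"

definition signed :: "'g smax \<Rightarrow> bool" where
  "signed x \<longleftrightarrow> x = SZero \<or> (\<exists>g. x = Pos g) \<or> (\<exists>g. x = Neg g)"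

definition balanced :: "'g::linordered_ab_group_add smax \<Rightarrow> bool" where
  "balanced x \<longleftrightarrow> (\<exists>c. x = sminus c c)"

definition sless :: "'g::linordered_ab_group_add smax \<Rightarrow> 'g smax \<Rightarrow> bool" where
  "sless a b \<longleftrightarrow> (\<exists>g. sminus b a = Pos g)"

definition sprec :: "'g::linordered_ab_group_add smax \<Rightarrow> 'g smax \<Rightarrow> bool" where
  "sprec a b \<longleftrightarrow> b = a + b"

definition ssucc :: "'g::linordered_ab_group_add smax \<Rightarrow> 'g smax \<Rightarrow> bool" where
  "ssucc a b \<longleftrightarrow> sprec b a \<and> a \<noteq> b"

definition divisible_group :: "'g::ab_group_add itself \<Rightarrow> bool" where
  "divisible_group _ \<longleftrightarrow> (\<forall>(g::'g) (m::nat). m > 0 \<longrightarrow> (\<exists>h. (\<Sum>_<m. h) = g))"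

type_synonym 'g smat = "nat \<Rightarrow> nat \<Rightarrow> 'g smax"

definition psign :: "(nat \<Rightarrow> nat) \<Rightarrow> 'g::linordered_ab_group_add smax" where
  "psign \<sigma> = (if evenperm \<sigma> then 1 else sneg 1)"

definition sdet :: "nat \<Rightarrow> 'g::linordered_ab_group_add smat \<Rightarrow> 'g smax" where
  "sdet n M = (\<Sum>\<sigma> | \<sigma> permutes {1..n}. psign \<sigma> * (\<Prod>i = 1..n. M i (\<sigma> i)))"

definition skipidx :: "nat \<Rightarrow> nat \<Rightarrow> nat" where
  "skipidx r i = (if i < r then i else i + 1)"

definition minor :: "'g smat \<Rightarrow> nat \<Rightarrow> nat \<Rightarrow> 'g smat" where
  "minor M r c = (\<lambda>i j. M (skipidx r i) (skipidx c j))"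

definition sadj :: "nat \<Rightarrow> 'g::linordered_ab_group_add smat \<Rightarrow> 'g smat" where
  "sadj n M = (\<lambda>i j. (sneg 1) ^ (i + j) * sdet (n - 1) (minor M j i))"

definition TPD :: "nat \<Rightarrow> 'g::linordered_ab_group_add smat \<Rightarrow> bool" where
  "TPD n A \<longleftrightarrow>
     (\<forall>i\<in>{1..n}. \<forall>j\<in>{1..n}. A i j = A j i \<and> signed (A i j)) \<and>
     (\<forall>i\<in>{1..n}. sless 0 (A i i)) \<and>
     (\<forall>i\<in>{1..n}. \<forall>j\<in>{1..n}. i \<noteq> j \<longrightarrow> sless (A i j ^ 2) (A i i * A j j))"

definition shift_mat :: "'g::linordered_ab_group_add smax \<Rightarrow> 'g smat \<Rightarrow> 'g smat" where
  "shift_mat \<gamma> A = (\<lambda>i j. sminus (if i = j then \<gamma> else 0) (A i j))"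

text \<open>The S_max-eigenvalues of A in TPD are its diagonal entries, counted with multiplicity;
  the k-th one is simple iff it occurs exactly once.\<close>
definition simple_eig :: "nat \<Rightarrow> 'g smat \<Rightarrow> nat \<Rightarrow> bool" where
  "simple_eig n A k \<longleftrightarrow> card {i\<in>{1..n}. A i i = A k k} = 1"

end

theory Submission
  imports Defs
begin

lemma times_zero_iff: "((x::'g::linordered_ab_group_add smax) * y = 0) \<longleftrightarrow> x = 0 \<or> y = 0"
  by (cases x; cases y) (auto simp: times_smax_def zero_smax_def)

lemma md_times: "(x::'g::linordered_ab_group_add smax) \<noteq> 0 \<Longrightarrow> y \<noteq> 0 \<Longrightarrow> md (x * y) = md x + md y"
  by (cases x; cases y) (auto simp: times_smax_def zero_smax_def)

lemma times_bal: "(x::'g::linordered_ab_group_add smax) \<noteq> 0 \<Longrightarrow> y \<noteq> 0 \<Longrightarrow>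
   (\<exists>g. x * y = Bal g) \<longleftrightarrow> (\<exists>g. x = Bal g) \<or> (\<exists>g. y = Bal g)"
  by (cases x; cases y) (auto simp: times_smax_def zero_smax_def)

lemma one_nz: "(1::'g::linordered_ab_group_add smax) \<noteq> 0"
  by (simp add: one_smax_def zero_smax_def)

lemma prod_zero_iff: "finite S \<Longrightarrow> (prod (f::_ \<Rightarrow> 'g::linordered_ab_group_add smax) S = 0) \<longleftrightarrow> (\<exists>s\<in>S. f s = 0)"
  by (induction S rule: finite_induct) (auto simp: times_zero_iff one_nz)

lemma md_prod: "finite S \<Longrightarrow> \<forall>s\<in>S. f s \<noteq> 0 \<Longrightarrow>
   md (prod (f::_ \<Rightarrow> 'g::linordered_ab_group_add smax) S) = (\<Sum>s\<in>S. md (f s))"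
proof (induction S rule: finite_induct)
  case empty then show ?case by (simp add: one_smax_def)
next
  case (insert x F)
  then show ?case by (simp add: md_times prod_zero_iff)
qed

lemma prod_bal: "finite S \<Longrightarrow> \<forall>s\<in>S. f s \<noteq> 0 \<Longrightarrow>
   (\<exists>g. prod (f::_ \<Rightarrow> 'g::linordered_ab_group_add smax) S = Bal g) \<longleftrightarrow> (\<exists>s\<in>S. \<exists>g. f s = Bal g)"
proof (induction S rule: finite_induct)
  case empty then show ?case by (simp add: one_smax_def)
next
  case (insert x F)
  then show ?case by (simp add: times_bal prod_zero_iff)
qed

lemma small_plus: "((x::'g::linordered_ab_group_add smax) = 0 \<or> md x < c) \<Longrightarrow> (y = 0 \<or> md y < c)
  \<Longrightarrow> x + y = 0 \<or> md (x + y) < c"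
  by (cases x; cases y) (auto simp: plus_smax_def zero_smax_def)

lemma small_sum: "finite S \<Longrightarrow> \<forall>s\<in>S. f s = 0 \<or> md (f s) < c \<Longrightarrow>
   sum (f::_ \<Rightarrow> 'g::linordered_ab_group_add smax) S = 0 \<or> md (sum f S) < c"
proof (induction S rule: finite_induct)
  case empty then show ?case by simp
next
  case (insert x F)
  then show ?case using small_plus[of "f x" c "sum f F"] by simp
qed

lemma dom_plus: "(y::'g::linordered_ab_group_add smax) \<noteq> 0 \<Longrightarrow> (x = 0 \<or> md x < md y) \<Longrightarrow> x + y = y"
  by (cases x; cases y) (auto simp: plus_smax_def zero_smax_def)

lemma dom_sum:
  assumes "finite S" "s0 \<in> S" "f s0 \<noteq> 0"
    "\<forall>s\<in>S - {s0}. f s = 0 \<or> md (f s) < md (f s0)"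
  shows "sum (f::_ \<Rightarrow> 'g::linordered_ab_group_add smax) S = f s0"
proof -
  have "sum f S = f s0 + sum f (S - {s0})" using assms(1,2) by (simp add: sum.remove)
  also have "\<dots> = sum f (S - {s0}) + f s0" by (simp add: add.commute)
  also have "\<dots> = f s0"
    by (rule dom_plus[OF assms(3)]) (rule small_sum, use assms in auto)
  finally show ?thesis .
qed

lemma psign_nz: "psign \<sigma> \<noteq> (0::'g::linordered_ab_group_add smax)" and md_psign: "md (psign \<sigma> :: 'g smax) = 0"
  by (auto simp: psign_def one_smax_def zero_smax_def)

lemma double_less: "(x::'g::linordered_ab_group_add) + x < y + y \<Longrightarrow> x < y"
  by (meson add_mono not_less)

lemma det_diag_dom:
  fixes C :: "'g::linordered_ab_group_add smat"
  assumes nz: "\<forall>a\<in>{1..m}. C a a \<noteq> 0"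
  and off: "\<forall>a\<in>{1..m}. \<forall>b\<in>{1..m}. a \<noteq> b \<longrightarrow> C a b = 0 \<or>
              md (C a b) + md (C a b) < md (C a a) + md (C b b)"
  shows "sdet m C = prod (\<lambda>a. C a a) {1..m}"
proof -
  let ?t = "\<lambda>\<sigma>. psign \<sigma> * (\<Prod>i=1..m. C i (\<sigma> i))"
  have fin: "finite {\<sigma>. \<sigma> permutes {1..m}}" by (simp add: finite_permutations)
  have idp: "id \<in> {\<sigma>. \<sigma> permutes {1..m}}" by (simp add: permutes_id)
  have tid: "?t id = prod (\<lambda>a. C a a) {1..m}" by (simp add: psign_def)
  have pnz: "prod (\<lambda>a. C a a) {1..m} \<noteq> 0" using nz by (simp add: prod_zero_iff)
  have tidnz: "?t id \<noteq> 0" using tid pnz by simp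
  have mdid: "md (?t id) = (\<Sum>a=1..m. md (C a a))" using tid nz by (simp add: md_prod)
  have small: "\<forall>\<sigma>\<in>{\<sigma>. \<sigma> permutes {1..m}} - {id}. ?t \<sigma> = 0 \<or> md (?t \<sigma>) < md (?t id)"
  proof
    fix \<sigma> assume s: "\<sigma> \<in> {\<sigma>. \<sigma> permutes {1..m}} - {id}"
    then have perm: "\<sigma> permutes {1..m}" and ne: "\<sigma> \<noteq> id" by auto
    show "?t \<sigma> = 0 \<or> md (?t \<sigma>) < md (?t id)"
    proof (cases "\<exists>i\<in>{1..m}. C i (\<sigma> i) = 0")
      case True
      then show ?thesis by (simp add: prod_zero_iff times_zero_iff)
    next
      case False
      let ?h = "\<lambda>i. md (C i (\<sigma> i))"
      let ?e = "\<lambda>i. md (C i i)"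
      have mdt: "md (?t \<sigma>) = (\<Sum>i=1..m. ?h i)"
        using False by (simp add: md_times psign_nz md_psign prod_zero_iff md_prod)
      obtain j where j: "j \<in> {1..m}" "\<sigma> j \<noteq> j"
        using ne perm by (metis eq_id_iff permutes_not_in)
      have le: "\<forall>i\<in>{1..m}. ?h i + ?h i \<le> ?e i + ?e (\<sigma> i)"
      proof
        fix i assume i: "i \<in> {1..m}"
        have si: "\<sigma> i \<in> {1..m}" using permutes_in_image[OF perm] i by blast
        show "?h i + ?h i \<le> ?e i + ?e (\<sigma> i)"
        proof (cases "\<sigma> i = i")
          case True then show ?thesis by simp
        next
          case f: False
          then show ?thesis using off i si False by fastforce
        qed
      qed
      have sj: "\<sigma> j \<in> {1..m}" using permutes_in_image[OF perm] j(1) by blast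
      have lt: "?h j + ?h j < ?e j + ?e (\<sigma> j)"
        using off j False sj by fastforce
      have "(\<Sum>i=1..m. ?h i + ?h i) < (\<Sum>i=1..m. ?e i + ?e (\<sigma> i))"
        by (rule sum_strict_mono_ex1) (use le lt j in auto)
      also have "\<dots> = (\<Sum>i=1..m. ?e i) + (\<Sum>i=1..m. ?e (\<sigma> i))" by (simp add: sum.distrib)
      also have "(\<Sum>i=1..m. ?e (\<sigma> i)) = (\<Sum>i=1..m. ?e i)"
        using sum.permute[OF perm, of ?e] by (simp add: comp_def)
      finally have "(\<Sum>i=1..m. ?h i) + (\<Sum>i=1..m. ?h i) < (\<Sum>i=1..m. ?e i) + (\<Sum>i=1..m. ?e i)"
        by (simp add: sum.distrib)
      then have "(\<Sum>i=1..m. ?h i) < (\<Sum>i=1..m. ?e i)" by (rule double_less)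
      then show ?thesis using mdt mdid by simp
    qed
  qed
  have "sdet m C = ?t id"
    unfolding sdet_def by (rule dom_sum[OF fin idp tidnz small])
  then show ?thesis using tid by simp
qed


lemma tpd_diag: "TPD n (A::'g::linordered_ab_group_add smat) \<Longrightarrow> i \<in> {1..n} \<Longrightarrow> A i i = Pos (md (A i i))"
proof -
  assume "TPD n A" "i \<in> {1..n}"
  then obtain g where "A i i + sneg 0 = Pos g" unfolding TPD_def sless_def sminus_def by blast
  then have "A i i = Pos g" by (metis add_0_right sneg.simps(1) zero_smax_def)
  then show ?thesis by simp
qed

lemma shift_diag:
  fixes a b :: "'g::linordered_ab_group_add"
  shows "sminus (Pos a) (Pos b) \<noteq> 0 \<and> md (sminus (Pos a) (Pos b)) = max a b \<and>
     ((\<exists>h. sminus (Pos a) (Pos b) = Bal h) \<longleftrightarrow> b = a)"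
  by (auto simp: sminus_def plus_smax_def zero_smax_def max_def)

lemma tpd_off:
  fixes A :: "'g::linordered_ab_group_add smat"
  assumes "TPD n A" "x \<in> {1..n}" "y \<in> {1..n}" "x \<noteq> y"
  shows "sminus 0 (A x y) = 0 \<or>
     md (sminus 0 (A x y)) + md (sminus 0 (A x y)) < md (A x x) + md (A y y)"
proof -
  have sg: "signed (A x y)" and sl: "sless (A x y ^ 2) (A x x * A y y)"
    using assms unfolding TPD_def by auto
  have ax: "A x x = Pos (md (A x x))" and ay: "A y y = Pos (md (A y y))"
    using tpd_diag assms by blast+
  show ?thesis
  proof (cases "A x y = 0")
    case True then show ?thesis by (simp add: sminus_def zero_smax_def plus_smax_def)
  next
    case False
    then obtain m where m: "A x y = Pos m \<or> A x y = Neg m" using sg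
      by (auto simp: signed_def zero_smax_def)
    have sq: "A x y ^ 2 = Pos (m + m)" using m
      by (auto simp: power2_eq_square times_smax_def)
    have pr: "A x x * A y y = Pos (md (A x x) + md (A y y))"
      by (subst ax, subst ay) (simp add: times_smax_def)
    have "m + m < md (A x x) + md (A y y)"
      using sl unfolding sq pr sless_def sminus_def
      by (auto simp: plus_smax_def split: if_splits)
    moreover have "md (sminus 0 (A x y)) = m" using m
      by (auto simp: sminus_def plus_smax_def zero_smax_def)
    ultimately show ?thesis by simp
  qed
qed

lemma skip_bij: "i \<in> {1..n} \<Longrightarrow> bij_betw (skipidx i) {1..n-1} ({1..n} - {i})"
  unfolding bij_betw_def
proof
  show "inj_on (skipidx i) {1..n-1}" by (auto simp: inj_on_def skipidx_def split: if_splits)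
  assume i: "i \<in> {1..n}"
  show "skipidx i ` {1..n-1} = {1..n} - {i}"
  proof
    show "skipidx i ` {1..n-1} \<subseteq> {1..n} - {i}" using i by (auto simp: skipidx_def)
    show "{1..n} - {i} \<subseteq> skipidx i ` {1..n-1}"
    proof
      fix j assume j: "j \<in> {1..n} - {i}"
      show "j \<in> skipidx i ` {1..n-1}"
      proof (cases "j < i")
        case True then show ?thesis using i j by (auto simp: skipidx_def image_iff intro!: bexI[of _ j])
      next
        case False then show ?thesis using i j by (auto simp: skipidx_def image_iff intro!: bexI[of _ "j - 1"])
      qed
    qed
  qed
qed

lemma sneg_pow: "(sneg 1 :: 'g::linordered_ab_group_add smax) ^ (i + i) = 1"
proof -
  have "(sneg 1 :: 'g smax) * sneg 1 = 1" by (simp add: one_smax_def times_smax_def)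
  then show ?thesis by (simp only: mult_2[symmetric] power_mult power2_eq_square power_one)
qed


lemma balanced_iff: "balanced (x::'g::linordered_ab_group_add smax) \<longleftrightarrow> x = 0 \<or> (\<exists>g. x = Bal g)"
proof
  assume "balanced x"
  then obtain c where "x = sminus c c" unfolding balanced_def by blast
  then show "x = 0 \<or> (\<exists>g. x = Bal g)"
    by (cases c) (auto simp: sminus_def plus_smax_def zero_smax_def)
next
  assume "x = 0 \<or> (\<exists>g. x = Bal g)"
  then show "balanced x"
  proof
    assume "x = 0" then show ?thesis unfolding balanced_def
      by (intro exI[of _ SZero]) (simp add: sminus_def zero_smax_def plus_smax_def)
  next
    assume "\<exists>g. x = Bal g"
    then obtain g where "x = Bal g" by blast
    then show ?thesis unfolding balanced_def
      by (intro exI[of _ "Pos g"]) (simp add: sminus_def plus_smax_def)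
  qed
qed

theorem proposition5p1:
  fixes A :: "'g::linordered_ab_group_add smat" and n k :: nat
  assumes div: "divisible_group TYPE('g)"
    and tpd: "TPD n A"
    and ord: "\<forall>i. 1 \<le> i \<and> i < n \<longrightarrow> sprec (A (i + 1) (i + 1)) (A i i)"
    and k: "k \<in> {1..n}"
  shows "(\<forall>i\<in>{1..n}. sadj n (shift_mat (A k k) A) i i \<noteq> 0) \<and>
         (\<forall>i\<in>{1..n}. i \<noteq> k \<longrightarrow> balanced (sadj n (shift_mat (A k k) A) i i)) \<and>
         (balanced (sadj n (shift_mat (A k k) A) k k) \<longleftrightarrow> \<not> simple_eig n A k)"
proof -
  define B where "B = shift_mat (A k k) A"
  define g where "g = (\<lambda>i. md (A i i))"
  have Ad: "\<And>i. i \<in> {1..n} \<Longrightarrow> A i i = Pos (g i)" using tpd_diag[OF tpd] g_def by blast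
  have Bd: "\<And>j. j \<in> {1..n} \<Longrightarrow> B j j = sminus (Pos (g k)) (Pos (g j))"
    using Ad k by (simp add: B_def shift_mat_def)
  have Bnz: "\<And>j. j \<in> {1..n} \<Longrightarrow> B j j \<noteq> 0" using Bd shift_diag by metis
  have Bmd: "\<And>j. j \<in> {1..n} \<Longrightarrow> md (B j j) = max (g k) (g j)" using Bd shift_diag by metis
  have Bbal: "\<And>j. j \<in> {1..n} \<Longrightarrow> (\<exists>h. B j j = Bal h) \<longleftrightarrow> g j = g k" using Bd shift_diag by metis
  have adj: "sadj n B i i = prod (\<lambda>j. B j j) ({1..n} - {i})" if i: "i \<in> {1..n}" for i
  proof -
    have bij: "bij_betw (skipidx i) {1..n-1} ({1..n} - {i})" using skip_bij[OF i] .
    have sd: "sdet (n-1) (minor B i i) = prod (\<lambda>a. minor B i i a a) {1..n-1}"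
    proof (rule det_diag_dom)
      show "\<forall>a\<in>{1..n-1}. minor B i i a a \<noteq> 0"
        using bij_betw_apply[OF bij] Bnz by (simp add: minor_def)
      show "\<forall>a\<in>{1..n - 1}. \<forall>b\<in>{1..n - 1}. a \<noteq> b \<longrightarrow> minor B i i a b = 0 \<or>
          md (minor B i i a b) + md (minor B i i a b) < md (minor B i i a a) + md (minor B i i b b)"
      proof (intro ballI impI)
        fix a b assume a: "a \<in> {1..n-1}" and b: "b \<in> {1..n-1}" and ab: "a \<noteq> b"
        define x where "x = skipidx i a"
        define y where "y = skipidx i b"
        have x: "x \<in> {1..n}" using bij_betw_apply[OF bij a] x_def by blast
        have y: "y \<in> {1..n}" using bij_betw_apply[OF bij b] y_def by blast
        have xy: "x \<noteq> y" using bij a b ab unfolding x_def y_def bij_betw_def inj_on_def by blast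
        have Bxy: "B x y = sminus 0 (A x y)" using xy by (simp add: B_def shift_mat_def)
        have le: "md (A x x) + md (A y y) \<le> md (B x x) + md (B y y)"
          using Bmd[OF x] Bmd[OF y] g_def by (simp add: add_mono)
        have "B x y = 0 \<or> md (B x y) + md (B x y) < md (B x x) + md (B y y)"
          using tpd_off[OF tpd x y xy] le Bxy by auto
        then show "minor B i i a b = 0 \<or>
          md (minor B i i a b) + md (minor B i i a b) < md (minor B i i a a) + md (minor B i i b b)"
          by (simp add: minor_def x_def y_def)
      qed
    qed
    have "prod (\<lambda>a. minor B i i a a) {1..n-1} = prod (\<lambda>j. B j j) ({1..n} - {i})"
      unfolding minor_def using prod.reindex_bij_betw[OF bij, where g="\<lambda>j. B j j"] by simp
    then show ?thesis using sd by (simp add: sadj_def sneg_pow)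
  qed
  have fin: "\<And>i. finite ({1..n} - {i::nat})" by simp
  have nz: "\<And>i. i \<in> {1..n} \<Longrightarrow> sadj n B i i \<noteq> 0"
    using adj Bnz by (simp add: prod_zero_iff)
  have bal: "\<And>i. i \<in> {1..n} \<Longrightarrow> balanced (sadj n B i i) \<longleftrightarrow> (\<exists>j\<in>{1..n} - {i}. g j = g k)"
  proof -
    fix i assume i: "i \<in> {1..n}"
    have "balanced (sadj n B i i) \<longleftrightarrow> (\<exists>h. prod (\<lambda>j. B j j) ({1..n} - {i}) = Bal h)"
      using balanced_iff nz[OF i] adj[OF i] by metis
    also have "\<dots> \<longleftrightarrow> (\<exists>j\<in>{1..n} - {i}. \<exists>h. B j j = Bal h)"
      using prod_bal[OF fin[of i], where f="\<lambda>j. B j j"] Bnz by auto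
    also have "\<dots> \<longleftrightarrow> (\<exists>j\<in>{1..n} - {i}. g j = g k)" using Bbal by auto
    finally show "balanced (sadj n B i i) \<longleftrightarrow> (\<exists>j\<in>{1..n} - {i}. g j = g k)" .
  qed
  have simp_iff: "simple_eig n A k \<longleftrightarrow> \<not> (\<exists>j\<in>{1..n} - {k}. g j = g k)"
  proof -
    define S where "S = {i\<in>{1..n}. A i i = A k k}"
    have S: "S = {i\<in>{1..n}. g i = g k}" using Ad k unfolding S_def by auto
    have finS: "finite S" unfolding S_def by simp
    have kS: "k \<in> S" using k S by simp
    show ?thesis
    proof
      assume "simple_eig n A k"
      then have "card S = 1" unfolding simple_eig_def S_def .
      then obtain z where z: "S = {z}" using card_1_singletonE by blast
      show "\<not> (\<exists>j\<in>{1..n} - {k}. g j = g k)"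
      proof
        assume "\<exists>j\<in>{1..n} - {k}. g j = g k"
        then obtain j where j: "j \<in> {1..n}" "j \<noteq> k" "g j = g k" by blast
        have "j \<in> S" using j unfolding S by blast
        then show False using kS j(2) unfolding z by blast
      qed
    next
      assume "\<not> (\<exists>j\<in>{1..n} - {k}. g j = g k)"
      then have "S = {k}" using kS S by auto
      then show "simple_eig n A k" unfolding simple_eig_def S_def[symmetric] by simp
    qed
  qed
  have c2: "\<forall>i\<in>{1..n}. i \<noteq> k \<longrightarrow> balanced (sadj n B i i)"
  proof (intro ballI impI)
    fix i assume i: "i \<in> {1..n}" "i \<noteq> k"
    have "k \<in> {1..n} - {i}" using k i by blast
    then show "balanced (sadj n B i i)" using bal[OF i(1)] by blast
  qed
  have c3: "balanced (sadj n B k k) \<longleftrightarrow> \<not> simple_eig n A k"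
    using bal[OF k] simp_iff by blast
  have g1: "\<forall>i\<in>{1..n}. sadj n B i i \<noteq> 0" using nz by blast
  show ?thesis
    using g1 c2 c3 unfolding B_def by (intro conjI)
qed

end
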